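(* Let $\mathsf{F},\mathsf{B}:\mathbf{Set}\to\mathbf{Set}$ be functors. If $\mathsf{F}$ and $\mathsf{B}$ preserve monomorphisms whose domain is the empty set, then every homomorphism $h:(X,f)\to(Y,g)$ in $\mathit{Dialg}(\mathsf{F},\mathsf{B})$ factors as $h=m\circ e$, where $e:(X,f)\to(X',f')$ and $m:(X',f')\to(Y,g)$ are dialgebra homomorphisms whose underlying functions are respectively surjective and injective, and this factorisation is unique up to isomorphism of dialgebras. Without the assumption on $\mathsf{F}$ and $\mathsf{B}$, such a factorisation still exists for every homomorphism $h:(X,f)\to(Y,g)$ with $X\neq\emptyset$.
   Context: For functors $\mathsf{F},\mathsf{B}:\mathbf{Set}\to\mathbf{Set}$, an $(\mathsf{F},\mathsf{B})$-dialgebra is a pair $(X,f)$ with $X$ a set (the carrier) and $f:\mathsf{F}X\to\mathsf{B}X$ a function. A homomorphism $h:(X,f)\to(Y,g)$ is a function $h:X\to Y$ with $g\circ\mathsf{F}h=\mathsf{B}h\circ f$. Dialgebras and homomorphisms form the category $\mathit{Dialg}(\mathsf{F},\mathsf{B})$. *)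

theory Defs
  imports "HOL-Library.FuncSet"
begin

text \<open>The category Set is modelled by the subsets of a (arbitrary) universe type 'u;
a morphism X -> Y is an extensional function in X ->_E Y (so that equality of morphisms is
HOL equality).\<close>

definition is_functor ::
  "('u set \<Rightarrow> 'v set) \<Rightarrow> ('u set \<Rightarrow> 'u set \<Rightarrow> ('u \<Rightarrow> 'u) \<Rightarrow> 'v \<Rightarrow> 'v) \<Rightarrow> bool" where
  "is_functor Fo Fm \<longleftrightarrow>
     (\<forall>X Y h. h \<in> X \<rightarrow>\<^sub>E Y \<longrightarrow> Fm X Y h \<in> Fo X \<rightarrow>\<^sub>E Fo Y) \<and>
     (\<forall>X. Fm X X (\<lambda>x\<in>X. x) = (\<lambda>y\<in>Fo X. y)) \<and>
     (\<forall>X Y Z h k. h \<in> X \<rightarrow>\<^sub>E Y \<longrightarrow> k \<in> Y \<rightarrow>\<^sub>E Z \<longrightarrow>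
        Fm X Z (compose X k h) = compose (Fo X) (Fm Y Z k) (Fm X Y h))"

text \<open>Monomorphisms in Set are the injective functions.\<close>
definition preserves_monos_empty_dom ::
  "('u set \<Rightarrow> 'v set) \<Rightarrow> ('u set \<Rightarrow> 'u set \<Rightarrow> ('u \<Rightarrow> 'u) \<Rightarrow> 'v \<Rightarrow> 'v) \<Rightarrow> bool" where
  "preserves_monos_empty_dom Fo Fm \<longleftrightarrow>
     (\<forall>X Y h. X = {} \<longrightarrow> h \<in> X \<rightarrow>\<^sub>E Y \<longrightarrow> inj_on h X \<longrightarrow> inj_on (Fm X Y h) (Fo X))"

definition dialg :: "('u set \<Rightarrow> 'v set) \<Rightarrow> ('u set \<Rightarrow> 'w set) \<Rightarrow> 'u set \<Rightarrow> ('v \<Rightarrow> 'w) \<Rightarrow> bool" where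
  "dialg Fo Bo X f \<longleftrightarrow> f \<in> Fo X \<rightarrow>\<^sub>E Bo X"

definition dhom ::
  "('u set \<Rightarrow> 'v set) \<Rightarrow> ('u set \<Rightarrow> 'u set \<Rightarrow> ('u \<Rightarrow> 'u) \<Rightarrow> 'v \<Rightarrow> 'v) \<Rightarrow>
   ('u set \<Rightarrow> 'w set) \<Rightarrow> ('u set \<Rightarrow> 'u set \<Rightarrow> ('u \<Rightarrow> 'u) \<Rightarrow> 'w \<Rightarrow> 'w) \<Rightarrow>
   'u set \<Rightarrow> ('v \<Rightarrow> 'w) \<Rightarrow> 'u set \<Rightarrow> ('v \<Rightarrow> 'w) \<Rightarrow> ('u \<Rightarrow> 'u) \<Rightarrow> bool" where
  "dhom Fo Fm Bo Bm X f Y g h \<longleftrightarrow>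
     h \<in> X \<rightarrow>\<^sub>E Y \<and> compose (Fo X) g (Fm X Y h) = compose (Fo X) (Bm X Y h) f"

definition dialg_iso where
  "dialg_iso Fo Fm Bo Bm X f Y g i \<longleftrightarrow>
     dhom Fo Fm Bo Bm X f Y g i \<and>
     (\<exists>j. dhom Fo Fm Bo Bm Y g X f j \<and> compose X j i = (\<lambda>x\<in>X. x) \<and> compose Y i j = (\<lambda>y\<in>Y. y))"

definition epi_mono_fact where
  "epi_mono_fact Fo Fm Bo Bm X f Y g h X' f' e m \<longleftrightarrow>
     dialg Fo Bo X' f' \<and> dhom Fo Fm Bo Bm X f X' f' e \<and> dhom Fo Fm Bo Bm X' f' Y g m \<and>
     e ` X = X' \<and> inj_on m X' \<and> h = compose X m e"

end

theory Submission
  imports Defs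
begin

lemma compose_eqI:
  assumes "\<And>x. x \<in> X \<Longrightarrow> k (h x) = p x" "p \<in> extensional X"
  shows "compose X k h = p"
  using assms by (auto simp: compose_def restrict_def extensional_def fun_eq_iff)

lemma fcomp:
  assumes "is_functor Fo Fm" "h \<in> X \<rightarrow>\<^sub>E Y" "k \<in> Y \<rightarrow>\<^sub>E Z" "x \<in> Fo X"
  shows "Fm X Z (compose X k h) x = Fm Y Z k (Fm X Y h x)"
proof -
  have "Fm X Z (compose X k h) = compose (Fo X) (Fm Y Z k) (Fm X Y h)"
    using assms(1-3) unfolding is_functor_def by blast
  then show ?thesis using assms(4) by (simp add: compose_def)
qed

lemma fid:
  assumes "is_functor Fo Fm" "x \<in> Fo X"
  shows "Fm X X (\<lambda>x\<in>X. x) x = x"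
proof -
  have "Fm X X (\<lambda>x\<in>X. x) = (\<lambda>y\<in>Fo X. y)" using assms(1) unfolding is_functor_def by blast
  then show ?thesis using assms(2) by simp
qed

lemma ftype:
  assumes "is_functor Fo Fm" "h \<in> X \<rightarrow>\<^sub>E Y" "x \<in> Fo X"
  shows "Fm X Y h x \<in> Fo Y"
  using assms unfolding is_functor_def by blast

lemma hom_pt:
  assumes "dhom Fo Fm Bo Bm X f Y g h" "x \<in> Fo X"
  shows "g (Fm X Y h x) = Bm X Y h (f x)"
proof -
  have "compose (Fo X) g (Fm X Y h) = compose (Fo X) (Bm X Y h) f"
    using assms(1) unfolding dhom_def by blast
  then have "compose (Fo X) g (Fm X Y h) x = compose (Fo X) (Bm X Y h) f x" by simp
  then show ?thesis using assms(2) by (simp add: compose_def)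
qed

lemma homI:
  assumes "h \<in> X \<rightarrow>\<^sub>E Y" "\<And>x. x \<in> Fo X \<Longrightarrow> g (Fm X Y h x) = Bm X Y h (f x)"
  shows "dhom Fo Fm Bo Bm X f Y g h"
  unfolding dhom_def using assms by (auto simp: compose_def intro!: restrict_ext)

lemma inj_pres:
  assumes F: "is_functor Fo Fm" and h: "h \<in> X \<rightarrow>\<^sub>E Y" and inj: "inj_on h X" and ne: "X \<noteq> {}"
  shows "inj_on (Fm X Y h) (Fo X)"
proof -
  obtain x0 where x0: "x0 \<in> X" using ne by blast
  define r where "r = (\<lambda>y\<in>Y. if y \<in> h ` X then the_inv_into X h y else x0)"
  have r: "r \<in> Y \<rightarrow>\<^sub>E X" unfolding r_def using x0 inj
    by (auto simp: the_inv_into_f_f)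
  have c: "compose X r h = (\<lambda>x\<in>X. x)"
    apply (rule compose_eqI) using h inj by (auto simp: r_def the_inv_into_f_f)
  show ?thesis
  proof (rule inj_onI)
    fix a b assume a: "a \<in> Fo X" and b: "b \<in> Fo X" and eq: "Fm X Y h a = Fm X Y h b"
    have "a = Fm X X (compose X r h) a" using fid[OF F a] c by simp
    also have "\<dots> = Fm Y X r (Fm X Y h a)" using fcomp[OF F h r a] .
    also have "\<dots> = Fm Y X r (Fm X Y h b)" using eq by simp
    also have "\<dots> = Fm X X (compose X r h) b" using fcomp[OF F h r b] by simp
    also have "\<dots> = b" using fid[OF F b] c by simp
    finally show "a = b" .
  qed
qed

lemma exist_ne:
  assumes F: "is_functor Fo Fm" and B: "is_functor Bo Bm" and ne: "X \<noteq> {}"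
    and df: "dialg Fo Bo X f" and dg: "dialg Fo Bo Y g" and hh: "dhom Fo Fm Bo Bm X f Y g h"
  shows "\<exists>X' f' e m. epi_mono_fact Fo Fm Bo Bm X f Y g h X' f' e m"
proof -
  have h: "h \<in> X \<rightarrow>\<^sub>E Y" using hh unfolding dhom_def by blast
  define X' where "X' = h ` X"
  define m where "m = (\<lambda>y\<in>X'. y)"
  define s where "s = (\<lambda>y\<in>X'. SOME x. x \<in> X \<and> h x = y)"
  have hX': "h \<in> X \<rightarrow>\<^sub>E X'" using h unfolding X'_def by auto
  have mty: "m \<in> X' \<rightarrow>\<^sub>E Y" using h unfolding m_def X'_def by auto
  have sp: "\<And>y. y \<in> X' \<Longrightarrow> s y \<in> X \<and> h (s y) = y"
    unfolding s_def X'_def by (auto intro: someI2)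
  have sty: "s \<in> X' \<rightarrow>\<^sub>E X" using sp by (auto simp: s_def)
  have cs: "compose X' h s = m"
    apply (rule compose_eqI) using sp by (auto simp: m_def)
  have cm: "compose X m h = h"
    apply (rule compose_eqI) using h by (auto simp: m_def X'_def PiE_def)
  have ne': "X' \<noteq> {}" using ne unfolding X'_def by auto
  have injm: "inj_on m X'" unfolding m_def by (auto intro: inj_onI)
  have Binj: "inj_on (Bm X' Y m) (Bo X')" using inj_pres[OF B mty injm ne'] .
  have fty: "f \<in> Fo X \<rightarrow>\<^sub>E Bo X" using df unfolding dialg_def .
  have gty: "g \<in> Fo Y \<rightarrow>\<^sub>E Bo Y" using dg unfolding dialg_def .
  define f' where "f' = (\<lambda>y\<in>Fo X'. Bm X X' h (f (Fm X' X s y)))"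
  have f'ty: "f' \<in> Fo X' \<rightarrow>\<^sub>E Bo X'"
    unfolding f'_def using ftype[OF F sty] fty ftype[OF B hX'] by auto
  have key: "Bm X' Y m (f' y) = g (Fm X' Y m y)" if y: "y \<in> Fo X'" for y
  proof -
    have z: "f (Fm X' X s y) \<in> Bo X" using ftype[OF F sty y] fty by auto
    have "Bm X' Y m (f' y) = Bm X' Y m (Bm X X' h (f (Fm X' X s y)))" using y by (simp add: f'_def)
    also have "\<dots> = Bm X Y (compose X m h) (f (Fm X' X s y))" using fcomp[OF B hX' mty z] by simp
    also have "\<dots> = Bm X Y h (f (Fm X' X s y))" using cm by simp
    also have "\<dots> = g (Fm X Y h (Fm X' X s y))" using hom_pt[OF hh ftype[OF F sty y]] by simp
    also have "\<dots> = g (Fm X' Y (compose X' h s) y)" using fcomp[OF F sty h y] by simp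
    also have "\<dots> = g (Fm X' Y m y)" using cs by simp
    finally show ?thesis .
  qed
  have mhom: "dhom Fo Fm Bo Bm X' f' Y g m"
    by (rule homI[OF mty]) (simp add: key)
  have ehom: "dhom Fo Fm Bo Bm X f X' f' h"
  proof (rule homI[OF hX'])
    fix x assume x: "x \<in> Fo X"
    have a: "f' (Fm X X' h x) \<in> Bo X'" using f'ty ftype[OF F hX' x] by auto
    have b: "Bm X X' h (f x) \<in> Bo X'" using ftype[OF B hX'] fty x by auto
    have "Bm X' Y m (f' (Fm X X' h x)) = g (Fm X' Y m (Fm X X' h x))"
      using key ftype[OF F hX' x] by simp
    also have "\<dots> = g (Fm X Y (compose X m h) x)" using fcomp[OF F hX' mty x] by simp
    also have "\<dots> = g (Fm X Y h x)" using cm by simp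
    also have "\<dots> = Bm X Y h (f x)" using hom_pt[OF hh x] .
    also have "\<dots> = Bm X Y (compose X m h) (f x)" using cm by simp
    also have "\<dots> = Bm X' Y m (Bm X X' h (f x))" using fcomp[OF B hX' mty] fty x by auto
    finally show "f' (Fm X X' h x) = Bm X X' h (f x)"
      using Binj a b by (auto dest: inj_onD)
  qed
  have "epi_mono_fact Fo Fm Bo Bm X f Y g h X' f' h m"
    unfolding epi_mono_fact_def using f'ty ehom mhom injm cm
    by (auto simp: dialg_def X'_def)
  then show ?thesis by blast
qed

lemma exist_empty:
  assumes F: "is_functor Fo Fm" and B: "is_functor Bo Bm" and e: "X = {}"
    and df: "dialg Fo Bo X f" and hh: "dhom Fo Fm Bo Bm X f Y g h"
  shows "\<exists>X' f' e m. epi_mono_fact Fo Fm Bo Bm X f Y g h X' f' e m"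
proof -
  have h: "h \<in> X \<rightarrow>\<^sub>E Y" using hh unfolding dhom_def by blast
  have hid: "h = (\<lambda>x\<in>X. x)" using h e by (auto simp: fun_eq_iff PiE_def extensional_def)
  have hX: "h \<in> X \<rightarrow>\<^sub>E X" using hid by auto
  have fty: "f \<in> Fo X \<rightarrow>\<^sub>E Bo X" using df unfolding dialg_def .
  have ehom: "dhom Fo Fm Bo Bm X f X f h"
  proof (rule homI[OF hX])
    fix x assume x: "x \<in> Fo X"
    have "Fm X X h x = x" using fid[OF F x] hid by simp
    moreover have "Bm X X h (f x) = f x" using fid[OF B, of "f x" X] hid fty x by auto
    ultimately show "f (Fm X X h x) = Bm X X h (f x)" by simp
  qed
  have c: "h = compose X h h" using e hid by (simp add: compose_def restrict_def)
  have "epi_mono_fact Fo Fm Bo Bm X f Y g h X f h h"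
    unfolding epi_mono_fact_def using df ehom hh c e by auto
  then show ?thesis by blast
qed

lemma mediate_hom:
  assumes F: "is_functor Fo Fm" and B: "is_functor Bo Bm"
    and i: "i \<in> X1 \<rightarrow>\<^sub>E X2" and c: "compose X1 m2 i = m1"
    and h1: "dhom Fo Fm Bo Bm X1 f1 Y g m1" and h2: "dhom Fo Fm Bo Bm X2 f2 Y g m2"
    and inj: "inj_on (Bm X2 Y m2) (Bo X2)"
    and f1: "f1 \<in> Fo X1 \<rightarrow>\<^sub>E Bo X1" and f2: "f2 \<in> Fo X2 \<rightarrow>\<^sub>E Bo X2"
  shows "dhom Fo Fm Bo Bm X1 f1 X2 f2 i"
proof (rule homI[OF i])
  have m2: "m2 \<in> X2 \<rightarrow>\<^sub>E Y" using h2 unfolding dhom_def by blast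
  fix y assume y: "y \<in> Fo X1"
  have a: "f2 (Fm X1 X2 i y) \<in> Bo X2" using f2 ftype[OF F i y] by auto
  have b: "Bm X1 X2 i (f1 y) \<in> Bo X2" using ftype[OF B i] f1 y by auto
  have "Bm X2 Y m2 (f2 (Fm X1 X2 i y)) = g (Fm X2 Y m2 (Fm X1 X2 i y))"
    using hom_pt[OF h2 ftype[OF F i y]] by simp
  also have "\<dots> = g (Fm X1 Y (compose X1 m2 i) y)" using fcomp[OF F i m2 y] by simp
  also have "\<dots> = g (Fm X1 Y m1 y)" using c by simp
  also have "\<dots> = Bm X1 Y m1 (f1 y)" using hom_pt[OF h1 y] .
  also have "\<dots> = Bm X1 Y (compose X1 m2 i) (f1 y)" using c by simp
  also have "\<dots> = Bm X2 Y m2 (Bm X1 X2 i (f1 y))" using fcomp[OF B i m2] f1 y by auto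
  finally show "f2 (Fm X1 X2 i y) = Bm X1 X2 i (f1 y)"
    using inj a b by (auto dest: inj_onD)
qed

lemma Binj:
  assumes B: "is_functor Bo Bm" and P: "preserves_monos_empty_dom Bo Bm"
    and m: "m \<in> X \<rightarrow>\<^sub>E Y" and inj: "inj_on m X"
  shows "inj_on (Bm X Y m) (Bo X)"
proof (cases "X = {}")
  case True then show ?thesis using P m inj unfolding preserves_monos_empty_dom_def by blast
next
  case False then show ?thesis using inj_pres[OF B m inj] by blast
qed

lemma uniq:
  assumes F: "is_functor Fo Fm" and B: "is_functor Bo Bm"
    and P: "preserves_monos_empty_dom Bo Bm"
    and E1: "epi_mono_fact Fo Fm Bo Bm X f Y g h X1 f1 e1 m1"
    and E2: "epi_mono_fact Fo Fm Bo Bm X f Y g h X2 f2 e2 m2"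
  shows "\<exists>i. dialg_iso Fo Fm Bo Bm X1 f1 X2 f2 i \<and> compose X i e1 = e2 \<and> compose X1 m2 i = m1"
proof -
  have d1: "f1 \<in> Fo X1 \<rightarrow>\<^sub>E Bo X1" and he1: "dhom Fo Fm Bo Bm X f X1 f1 e1"
    and hm1: "dhom Fo Fm Bo Bm X1 f1 Y g m1" and im1: "e1 ` X = X1" and inj1: "inj_on m1 X1"
    and hc1: "h = compose X m1 e1"
    using E1 unfolding epi_mono_fact_def dialg_def by auto
  have d2: "f2 \<in> Fo X2 \<rightarrow>\<^sub>E Bo X2" and he2: "dhom Fo Fm Bo Bm X f X2 f2 e2"
    and hm2: "dhom Fo Fm Bo Bm X2 f2 Y g m2" and im2: "e2 ` X = X2" and inj2: "inj_on m2 X2"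
    and hc2: "h = compose X m2 e2"
    using E2 unfolding epi_mono_fact_def dialg_def by auto
  have m1: "m1 \<in> X1 \<rightarrow>\<^sub>E Y" using hm1 unfolding dhom_def by blast
  have m2: "m2 \<in> X2 \<rightarrow>\<^sub>E Y" using hm2 unfolding dhom_def by blast
  have e1: "e1 \<in> X \<rightarrow>\<^sub>E X1" using he1 unfolding dhom_def by blast
  have e2: "e2 \<in> X \<rightarrow>\<^sub>E X2" using he2 unfolding dhom_def by blast
  have hx1: "\<And>x. x \<in> X \<Longrightarrow> h x = m1 (e1 x)" using hc1 by (simp add: compose_def)
  have hx2: "\<And>x. x \<in> X \<Longrightarrow> h x = m2 (e2 x)" using hc2 by (simp add: compose_def)
  have r1: "m1 ` X1 = h ` X" using im1 hx1 by force
  have r2: "m2 ` X2 = h ` X" using im2 hx2 by force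
  define i where "i = (\<lambda>y\<in>X1. the_inv_into X2 m2 (m1 y))"
  define j where "j = (\<lambda>y\<in>X2. the_inv_into X1 m1 (m2 y))"
  have ip: "i y \<in> X2 \<and> m2 (i y) = m1 y" if "y \<in> X1" for y
  proof -
    have "m1 y \<in> m2 ` X2" using r1 r2 that by auto
    then show ?thesis using inj2 that by (auto simp: i_def the_inv_into_f_f)
  qed
  have jp: "j y \<in> X1 \<and> m1 (j y) = m2 y" if "y \<in> X2" for y
  proof -
    have "m2 y \<in> m1 ` X1" using r1 r2 that by auto
    then show ?thesis using inj1 that by (auto simp: j_def the_inv_into_f_f)
  qed
  have ity: "i \<in> X1 \<rightarrow>\<^sub>E X2" using ip by (auto simp: i_def)
  have jty: "j \<in> X2 \<rightarrow>\<^sub>E X1" using jp by (auto simp: j_def)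
  have ci: "compose X1 m2 i = m1"
    apply (rule compose_eqI) using ip m1 by (auto simp: PiE_def)
  have cj: "compose X2 m1 j = m2"
    apply (rule compose_eqI) using jp m2 by (auto simp: PiE_def)
  have hi: "dhom Fo Fm Bo Bm X1 f1 X2 f2 i"
    using mediate_hom[OF F B ity ci hm1 hm2 Binj[OF B P m2 inj2] d1 d2] .
  have hj: "dhom Fo Fm Bo Bm X2 f2 X1 f1 j"
    using mediate_hom[OF F B jty cj hm2 hm1 Binj[OF B P m1 inj1] d2 d1] .
  have cji: "compose X1 j i = (\<lambda>x\<in>X1. x)"
  proof (rule compose_eqI)
    fix y assume y: "y \<in> X1"
    have "m1 (j (i y)) = m1 y" using ip[OF y] jp[of "i y"] by auto
    then show "j (i y) = (\<lambda>x\<in>X1. x) y" using inj1 y ip[OF y] jp[of "i y"]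
      by (auto dest: inj_onD)
  qed auto
  have cij: "compose X2 i j = (\<lambda>x\<in>X2. x)"
  proof (rule compose_eqI)
    fix y assume y: "y \<in> X2"
    have "m2 (i (j y)) = m2 y" using jp[OF y] ip[of "j y"] by auto
    then show "i (j y) = (\<lambda>x\<in>X2. x) y" using inj2 y jp[OF y] ip[of "j y"]
      by (auto dest: inj_onD)
  qed auto
  have cie: "compose X i e1 = e2"
  proof (rule compose_eqI)
    fix x assume x: "x \<in> X"
    have ex: "e1 x \<in> X1" using e1 x by auto
    have "m2 (i (e1 x)) = m2 (e2 x)" using ip[OF ex] hx1[OF x] hx2[OF x] by simp
    then show "i (e1 x) = e2 x" using inj2 ip[OF ex] e2 x by (auto dest: inj_onD)
  next
    show "e2 \<in> extensional X" using e2 by (simp add: PiE_def)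
  qed
  have "dialg_iso Fo Fm Bo Bm X1 f1 X2 f2 i"
    unfolding dialg_iso_def using hi hj cji cij by blast
  then show ?thesis using cie ci by blast
qed

theorem proposition1:
  fixes Fo :: "'u set \<Rightarrow> 'v set" and Fm :: "'u set \<Rightarrow> 'u set \<Rightarrow> ('u \<Rightarrow> 'u) \<Rightarrow> 'v \<Rightarrow> 'v"
    and Bo :: "'u set \<Rightarrow> 'w set" and Bm :: "'u set \<Rightarrow> 'u set \<Rightarrow> ('u \<Rightarrow> 'u) \<Rightarrow> 'w \<Rightarrow> 'w"
  assumes "is_functor Fo Fm" and "is_functor Bo Bm"
  shows
   "(preserves_monos_empty_dom Fo Fm \<and> preserves_monos_empty_dom Bo Bm \<longrightarrow>
      (\<forall>X f Y g h. dialg Fo Bo X f \<longrightarrow> dialg Fo Bo Y g \<longrightarrow> dhom Fo Fm Bo Bm X f Y g h \<longrightarrow>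
         (\<exists>X' f' e m. epi_mono_fact Fo Fm Bo Bm X f Y g h X' f' e m) \<and>
         (\<forall>X1 f1 e1 m1 X2 f2 e2 m2.
            epi_mono_fact Fo Fm Bo Bm X f Y g h X1 f1 e1 m1 \<longrightarrow>
            epi_mono_fact Fo Fm Bo Bm X f Y g h X2 f2 e2 m2 \<longrightarrow>
            (\<exists>i. dialg_iso Fo Fm Bo Bm X1 f1 X2 f2 i \<and>
                 compose X i e1 = e2 \<and> compose X1 m2 i = m1)))) \<and>
    (\<forall>X f Y g h. X \<noteq> {} \<longrightarrow> dialg Fo Bo X f \<longrightarrow> dialg Fo Bo Y g \<longrightarrow>
         dhom Fo Fm Bo Bm X f Y g h \<longrightarrow>
         (\<exists>X' f' e m. epi_mono_fact Fo Fm Bo Bm X f Y g h X' f' e m))"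
proof -
  have ex: "\<exists>X' f' e m. epi_mono_fact Fo Fm Bo Bm X f Y g h X' f' e m"
    if "dialg Fo Bo X f" "dialg Fo Bo Y g" "dhom Fo Fm Bo Bm X f Y g h" for X f Y g h
    using exist_ne[OF assms] exist_empty[OF assms] that by (cases "X = {}") auto
  show ?thesis using ex uniq[OF assms] by (meson uniq[OF assms])
qed

end
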